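(* Let $\alpha\ge1$, $\beta$ odd, and let ${\cal C}=\langle (b\mid 0),(\ell\mid fh+2f)\rangle\subseteq R_{\alpha,\beta}$ be a $\mathbb{Z}_2\mathbb{Z}_4$-additive cyclic code, where $f,h,g\in\mathbb{Z}_4[x]$ with $fhg=x^\beta-1$, $b\in\mathbb{Z}_2[x]$ divides $x^\alpha-1$, and $\ell\in\mathbb{Z}_2[x]/(x^\alpha-1)$. Then there exists $\ell'\in\mathbb{Z}_2[x]/(x^\alpha-1)$ such that ${\cal C}=\langle (b\mid 0),(\ell\tilde g\mid 2fg),(\ell'\mid fh)\rangle$.
   Context: $R_{\alpha,\beta}=\mathbb{Z}_2[x]/(x^\alpha-1)\times\mathbb{Z}_4[x]/(x^\beta-1)$ is a $\mathbb{Z}_4[x]$-module via $p\star(b\mid a)=(\tilde pb\mid pa)$, where $\tilde p\in\mathbb{Z}_2[x]$ is the reduction of $p$ mod 2. A $\mathbb{Z}_2\mathbb{Z}_4$-additive cyclic code is a $\mathbb{Z}_4[x]$-submodule of $R_{\alpha,\beta}$; $\langle\cdot\rangle$ denotes the generated submodule. *)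

theory Defs
  imports "HOL-Computational_Algebra.Polynomial" "HOL-Library.Numeral_Type"
begin

text \<open>An element of R_{alpha,beta} = Z2[x]/(x^alpha-1) x Z4[x]/(x^beta-1) is represented by
  its canonical representative pair (b, a) with deg b < alpha, deg a < beta.\<close>

definition cyc_red :: "nat \<Rightarrow> 'a::comm_ring_1 poly \<Rightarrow> 'a poly" where
  "cyc_red n p = (\<Sum>j\<le>degree p. monom (coeff p j) (j mod n))"

definition mod2 :: "4 poly \<Rightarrow> 2 poly" where
  "mod2 p = map_poly (\<lambda>c. of_int (Rep_bit0 c)) p"

text \<open>The Z4[x]-submodule of R_{alpha,beta} generated by a finite list of elements:
  all Z4[x]-linear combinations  sum_i p_i * (b_i | a_i) = (sum_i p_i~ b_i | sum_i p_i a_i),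
  reduced to canonical representatives.\<close>
definition gen_code :: "nat \<Rightarrow> nat \<Rightarrow> (2 poly \<times> 4 poly) list \<Rightarrow> (2 poly \<times> 4 poly) set" where
  "gen_code \<alpha> \<beta> gs =
     {(cyc_red \<alpha> (\<Sum>i<length gs. mod2 (ps i) * fst (gs ! i)),
       cyc_red \<beta> (\<Sum>i<length gs. ps i * snd (gs ! i))) | ps. True}"

end

theory Submission
  imports Defs
begin

definition phi :: "4 \<Rightarrow> 2" where "phi c = of_int (Rep_bit0 c)"

lemma phi_of_int: "phi (of_int z) = of_int z"
proof -
  have "Rep_bit0 (of_int z :: 4) = z mod 4"
    by (simp add: bit0.of_int_eq Abs_bit0_inverse)
  moreover have "(of_int (z mod 4) :: 2) = of_int z"
    by (simp add: bit0.of_int_eq) (metis mod_mod_cancel dvd_def mult.commute numeral_Bit0_eq_double)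
  ultimately show ?thesis by (simp add: phi_def)
qed

lemma phi_add: "phi (a + b) = phi a + phi b"
  by (induct a, induct b) (metis of_int_add phi_of_int)
lemma phi_mult: "phi (a * b) = phi a * phi b"
  by (induct a, induct b) (metis of_int_mult phi_of_int)
lemma phi_0: "phi 0 = 0" by (metis of_int_0 phi_of_int)
lemma phi_1: "phi 1 = 1" by (metis of_int_1 phi_of_int)
lemma phi_2: "phi 2 = 0" using phi_of_int[of 2] by simp

lemma mod2_eq: "mod2 p = map_poly phi p" by (simp add: mod2_def phi_def[abs_def])

lemma mod2_add: "mod2 (p + q) = mod2 p + mod2 q"
  by (rule poly_eqI) (simp add: mod2_eq coeff_map_poly phi_0 phi_add)

lemma mod2_smult: "mod2 (smult a q) = smult (phi a) (mod2 q)"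
  unfolding mod2_eq by (rule map_poly_smult) (auto simp: phi_0 phi_mult)

lemma mod2_mult: "mod2 (p * q) = mod2 p * mod2 q"
proof (induct p)
  case 0 then show ?case by (simp add: mod2_eq)
next
  case (pCons a p)
  then show ?case
    by (simp add: mod2_add mod2_smult) (simp add: mod2_eq map_poly_pCons phi_0)
qed

lemma mod2_1: "mod2 1 = 1" by (simp add: mod2_eq phi_1)
lemma mod2_2: "mod2 2 = 0"
proof -
  have "(2::2 poly) = [:2:]" by (metis of_nat_numeral of_nat_poly)
  moreover have "(2::2) = 0" by simp
  ultimately have "(2::2 poly) = 0" by simp
  then show ?thesis by (metis mod2_add mod2_1 one_add_one)
qed

lemma mod2_diff: "mod2 (p - q) = mod2 p - mod2 q"
  by (metis add_diff_cancel diff_add_cancel mod2_add)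

lemma four_zero: "(4::4 poly) = 0"
proof -
  have "(4::4 poly) = [:4:]" by (metis of_nat_numeral of_nat_poly)
  moreover have "(4::4) = 0" by simp
  ultimately show ?thesis by simp
qed

lemma cyc_red_ext:
  assumes "degree p \<le> N"
  shows "cyc_red n p = (\<Sum>j\<le>N. monom (coeff p j) (j mod n))"
  unfolding cyc_red_def
  by (rule sum.mono_neutral_left) (use assms in \<open>auto simp: coeff_eq_0\<close>)

lemma cyc_red_add: fixes p q :: "'a::comm_ring_1 poly" shows "cyc_red n (p + q) = cyc_red n p + cyc_red n q"
proof -
  define N where "N = max (degree p) (degree q)"
  have "degree (p + q) \<le> N" "degree p \<le> N" "degree q \<le> N"
    using degree_add_le_max[of p q] by (auto simp: N_def)
  then show ?thesis
    by (simp add: cyc_red_ext[where N=N] sum.distrib add_monom[symmetric])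
qed

lemma cyc_red_0: "cyc_red n 0 = 0" by (simp add: cyc_red_def)

lemma cyc_red_minus: "cyc_red n (- p) = - cyc_red n p"
  by (metis add_eq_0_iff cyc_red_0 cyc_red_add)

lemma cyc_red_diff: "cyc_red n (p - q) = cyc_red n p - cyc_red n q"
  by (metis cyc_red_add cyc_red_minus diff_conv_add_uminus)

lemma cyc_red_sum: "cyc_red n (sum F A) = (\<Sum>i\<in>A. cyc_red n (F i))"
  by (induct A rule: infinite_finite_induct) (auto simp: cyc_red_0 cyc_red_add)

lemma cyc_red_monom: "cyc_red n (monom c k) = monom c (k mod n)"
proof -
  have "cyc_red n (monom c k) = (\<Sum>j\<le>k. monom (coeff (monom c k) j) (j mod n))"
    by (rule cyc_red_ext) (simp add: degree_monom_le)
  also have "\<dots> = monom c (k mod n)"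
    by (subst sum.remove[of _ k]) (auto simp: coeff_monom intro!: sum.neutral)
  finally show ?thesis .
qed

lemma cyc_red_mult_cyc: "cyc_red n (p * (monom 1 n - 1)) = 0"
proof -
  have "p * (monom 1 n - 1) = (\<Sum>i\<le>degree p. monom (coeff p i) (i + n) - monom (coeff p i) i)"
    by (subst (1) poly_as_sum_of_monoms[symmetric])
       (simp add: sum_distrib_right sum_distrib_left algebra_simps mult_monom sum_subtractf)
  then show ?thesis
    by (simp add: cyc_red_sum cyc_red_diff cyc_red_monom)
qed

lemma cyc_red_cong: "cyc_red n (a + k * (monom 1 n - 1)) = cyc_red n a"
  by (simp add: cyc_red_add cyc_red_mult_cyc)

lemma gen2: "gen_code a b [(x1,y1),(x2,y2)] =
  {(cyc_red a (mod2 p0 * x1 + mod2 p1 * x2), cyc_red b (p0 * y1 + p1 * y2)) | p0 p1. True}"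
  unfolding gen_code_def
proof (intro set_eqI iffI)
  fix z assume "z \<in> {(cyc_red a (\<Sum>i<length [(x1,y1),(x2,y2)]. mod2 (ps i) * fst ([(x1,y1),(x2,y2)] ! i)),
       cyc_red b (\<Sum>i<length [(x1,y1),(x2,y2)]. ps i * snd ([(x1,y1),(x2,y2)] ! i))) | ps. True}"
  then obtain ps where "z = (cyc_red a (\<Sum>i<length [(x1,y1),(x2,y2)]. mod2 (ps i) * fst ([(x1,y1),(x2,y2)] ! i)),
       cyc_red b (\<Sum>i<length [(x1,y1),(x2,y2)]. ps i * snd ([(x1,y1),(x2,y2)] ! i)))" by blast
  then show "z \<in> {(cyc_red a (mod2 p0 * x1 + mod2 p1 * x2), cyc_red b (p0 * y1 + p1 * y2)) | p0 p1. True}"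
    by (auto simp: numeral_2_eq_2 lessThan_Suc add.commute)
next
  fix z assume "z \<in> {(cyc_red a (mod2 p0 * x1 + mod2 p1 * x2), cyc_red b (p0 * y1 + p1 * y2)) | p0 p1. True}"
  then obtain p0 p1 where z: "z = (cyc_red a (mod2 p0 * x1 + mod2 p1 * x2), cyc_red b (p0 * y1 + p1 * y2))" by blast
  let ?ps = "\<lambda>i::nat. if i = 0 then p0 else p1"
  show "z \<in> {(cyc_red a (\<Sum>i<length [(x1,y1),(x2,y2)]. mod2 (ps i) * fst ([(x1,y1),(x2,y2)] ! i)),
       cyc_red b (\<Sum>i<length [(x1,y1),(x2,y2)]. ps i * snd ([(x1,y1),(x2,y2)] ! i))) | ps. True}"
    by (rule CollectI, rule exI[of _ ?ps]) (simp add: z numeral_2_eq_2 lessThan_Suc add.commute)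
qed

lemma gen3: "gen_code a b [(x1,y1),(x2,y2),(x3,y3)] =
  {(cyc_red a (mod2 p0 * x1 + mod2 p1 * x2 + mod2 p2 * x3), cyc_red b (p0 * y1 + p1 * y2 + p2 * y3)) | p0 p1 p2. True}"
  unfolding gen_code_def
proof (intro set_eqI iffI)
  fix z assume "z \<in> {(cyc_red a (\<Sum>i<length [(x1,y1),(x2,y2),(x3,y3)]. mod2 (ps i) * fst ([(x1,y1),(x2,y2),(x3,y3)] ! i)),
       cyc_red b (\<Sum>i<length [(x1,y1),(x2,y2),(x3,y3)]. ps i * snd ([(x1,y1),(x2,y2),(x3,y3)] ! i))) | ps. True}"
  then obtain ps where "z = (cyc_red a (\<Sum>i<length [(x1,y1),(x2,y2),(x3,y3)]. mod2 (ps i) * fst ([(x1,y1),(x2,y2),(x3,y3)] ! i)),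
       cyc_red b (\<Sum>i<length [(x1,y1),(x2,y2),(x3,y3)]. ps i * snd ([(x1,y1),(x2,y2),(x3,y3)] ! i)))" by blast
  then show "z \<in> {(cyc_red a (mod2 p0 * x1 + mod2 p1 * x2 + mod2 p2 * x3), cyc_red b (p0 * y1 + p1 * y2 + p2 * y3)) | p0 p1 p2. True}"
    by (auto simp: numeral_3_eq_3 lessThan_Suc add.commute add.left_commute)
next
  fix z assume "z \<in> {(cyc_red a (mod2 p0 * x1 + mod2 p1 * x2 + mod2 p2 * x3), cyc_red b (p0 * y1 + p1 * y2 + p2 * y3)) | p0 p1 p2. True}"
  then obtain p0 p1 p2 where z: "z = (cyc_red a (mod2 p0 * x1 + mod2 p1 * x2 + mod2 p2 * x3), cyc_red b (p0 * y1 + p1 * y2 + p2 * y3))" by blast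
  let ?ps = "\<lambda>i::nat. if i = 0 then p0 else if i = 1 then p1 else p2"
  show "z \<in> {(cyc_red a (\<Sum>i<length [(x1,y1),(x2,y2),(x3,y3)]. mod2 (ps i) * fst ([(x1,y1),(x2,y2),(x3,y3)] ! i)),
       cyc_red b (\<Sum>i<length [(x1,y1),(x2,y2),(x3,y3)]. ps i * snd ([(x1,y1),(x2,y2),(x3,y3)] ! i))) | ps. True}"
    by (rule CollectI, rule exI[of _ ?ps]) (simp add: z numeral_3_eq_3 lessThan_Suc add.commute add.left_commute)
qed

function D :: "'a::comm_ring_1 poly \<Rightarrow> 'a poly"
  where "D (pCons a p) = (if p = 0 then 0 else p + pCons 0 (D p))"
  by (auto intro: pCons_cases)

termination D
  by (relation "measure degree") simp_all

declare D.simps[simp del]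

lemma D_0 [simp]: "D 0 = 0"
  using D.simps [of 0 0] by simp

lemma D_pCons: "D (pCons a p) = p + pCons 0 (D p)"
  by (simp add: D.simps)

lemma coeff_D: "coeff (D p) n = of_nat (Suc n) * coeff p (Suc n)"
  by (induct p arbitrary: n)
    (auto simp add: D_pCons coeff_pCons algebra_simps split: nat.split)

lemma D_add: "D (p + q) = D p + D q"
  by (rule poly_eqI) (simp add: coeff_D algebra_simps)

lemma D_diff: "D (p - q) = D p - D q"
  by (rule poly_eqI) (simp add: coeff_D algebra_simps)

lemma D_smult: "D (smult a p) = smult a (D p)"
  by (rule poly_eqI) (simp add: coeff_D algebra_simps)

lemma D_mult: "D (p * q) = p * D q + q * D p"
  by (induct p) (auto simp: D_add D_smult D_pCons algebra_simps)

lemma D_one: "D 1 = 0"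
  by (rule poly_eqI) (simp add: coeff_D)

lemma X_D_monom: "pCons 0 (D (monom 1 n)) = monom (of_nat n) n"
  by (rule poly_eqI) (auto simp: coeff_D coeff_pCons coeff_monom split: nat.split)

lemma bezout:
  fixes f h g :: "4 poly" and \<beta> :: nat
  assumes "odd \<beta>" and fhg: "f * h * g = monom 1 \<beta> - 1"
  shows "\<exists>A B. A * h + B * g = 1"
proof -
  define c where "c = (of_nat \<beta> :: 4 poly)"
  define X where "X = (pCons 0 1 :: 4 poly)"
  obtain k where k: "\<beta> = 2 * k + 1" using assms(1) oddE by blast
  have cc: "c * c = 1"
  proof -
    have "c * c = 4 * of_nat (k * k + k) + 1" unfolding c_def k
      by (simp add: algebra_simps)
    also have "\<dots> = 1" by (simp add: four_zero)
    finally show ?thesis .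
  qed
  have "monom (of_nat \<beta>) \<beta> = c * monom 1 \<beta>"
    by (simp add: c_def of_nat_poly smult_monom)
  then have "X * D (monom 1 \<beta> - 1) = c * monom 1 \<beta>"
    unfolding X_def by (simp add: D_diff D_one X_D_monom)
  hence "X * D (f*h*g) = c * (f*h*g + 1)" unfolding fhg by simp
  hence d: "X * (f * h * D g + g * (f * D h + h * D f)) = c * (f*h*g + 1)"
    by (simp add: D_mult)
  define A where "A = c * (X * (D f * g + f * D g) - c * f * g)"
  define B where "B = c * X * f * D h"
  have "A * h + B * g = c * (X * (f * h * D g + g * (f * D h + h * D f)) - c * (f*h*g))"
    unfolding A_def B_def by (simp add: algebra_simps)
  also have "\<dots> = c * (c * (f*h*g + 1) - c * (f*h*g))" by (simp only: d)
  also have "\<dots> = c * c" by (simp add: algebra_simps)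
  finally show ?thesis using cc by metis
qed

theorem mainTheorem5:
  fixes \<alpha> \<beta> :: nat and f h g :: "4 poly" and b l :: "2 poly"
  assumes "\<alpha> \<ge> 1" and "odd \<beta>"
    and "f * h * g = monom 1 \<beta> - 1"
    and "b dvd monom 1 \<alpha> - 1"
  shows "\<exists>l' :: 2 poly.
    gen_code \<alpha> \<beta> [(b, 0), (l, f * h + 2 * f)]
    = gen_code \<alpha> \<beta> [(b, 0), (l * mod2 g, 2 * f * g), (l', f * h)]"
proof -
  obtain A B where bez: "A * h + B * g = 1" using bezout[OF assms(2,3)] by blast
  define P where "P = 1 + 2 * A - B * g"
  have m2A: "mod2 (1 + 2 * A) = 1" by (simp add: mod2_add mod2_mult mod2_1 mod2_2)
  have mP: "mod2 P = 1 - mod2 B * mod2 g"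
    by (simp add: P_def mod2_diff mod2_add mod2_mult mod2_1 mod2_2)
  show ?thesis
  proof (intro exI[of _ "mod2 P * l"] set_eqI iffI)
    fix z assume "z \<in> gen_code \<alpha> \<beta> [(b, 0), (l, f * h + 2 * f)]"
    then obtain p0 p1 where z: "z = (cyc_red \<alpha> (mod2 p0 * b + mod2 p1 * l), cyc_red \<beta> (p0 * 0 + p1 * (f * h + 2 * f)))"
      unfolding gen2 by blast
    have e1: "mod2 p0 * b + mod2 (p1 * B) * (l * mod2 g) + mod2 (p1 * (1 + 2 * A)) * (mod2 P * l)
        = mod2 p0 * b + mod2 p1 * l"
      by (simp only: mod2_mult m2A mP) (simp add: algebra_simps)
    have "B * (2 * f * g) + (1 + 2 * A) * (f * h) = f * h + 2 * f * (A * h + B * g)"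
      by (simp add: algebra_simps)
    hence e0: "B * (2 * f * g) + (1 + 2 * A) * (f * h) = f * h + 2 * f" by (simp only: bez mult_1_right)
    have "p0 * 0 + p1 * B * (2 * f * g) + p1 * (1 + 2 * A) * (f * h) = p0 * 0 + p1 * (B * (2 * f * g) + (1 + 2 * A) * (f * h))"
      by (simp add: algebra_simps)
    hence e2: "p0 * 0 + p1 * B * (2 * f * g) + p1 * (1 + 2 * A) * (f * h) = p0 * 0 + p1 * (f * h + 2 * f)"
      by (simp only: e0)
    show "z \<in> gen_code \<alpha> \<beta> [(b, 0), (l * mod2 g, 2 * f * g), (mod2 P * l, f * h)]"
      unfolding gen3 z
      by (rule CollectI, rule exI[of _ p0], rule exI[of _ "p1 * B"], rule exI[of _ "p1 * (1 + 2 * A)"])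
         (simp only: e1 e2 simp_thms)
  next
    fix z assume "z \<in> gen_code \<alpha> \<beta> [(b, 0), (l * mod2 g, 2 * f * g), (mod2 P * l, f * h)]"
    then obtain p0 q r where z: "z = (cyc_red \<alpha> (mod2 p0 * b + mod2 q * (l * mod2 g) + mod2 r * (mod2 P * l)),
        cyc_red \<beta> (p0 * 0 + q * (2 * f * g) + r * (f * h)))"
      unfolding gen3 by blast
    have e1: "mod2 p0 * b + mod2 (q * g + r * P) * l = mod2 p0 * b + mod2 q * (l * mod2 g) + mod2 r * (mod2 P * l)"
      by (simp add: mod2_add mod2_mult algebra_simps)
    have id: "(q * g + r * P) * (f * h + 2 * f) = q * (2 * f * g) + r * (f * h) + (q - r * B) * (f * h * g)
        + r * f * (2 * (1 + A * h - B * g) + 4 * A)"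
      unfolding P_def by (simp add: algebra_simps)
    have Ah: "A * h = 1 - B * g" using bez by (simp add: eq_diff_eq)
    have "r * f * (2 * (1 + A * h - B * g) + 4 * A) = r * f * (2 * (1 + (1 - B * g) - B * g) + 4 * A)"
      by (simp only: Ah)
    also have "\<dots> = 4 * (r * f * (1 - B * g + A))" by (simp add: algebra_simps)
    also have "\<dots> = 0" by (simp only: four_zero mult_zero_left)
    finally have z0: "r * f * (2 * (1 + A * h - B * g) + 4 * A) = 0" .
    have "(q * g + r * P) * (f * h + 2 * f) = (q * (2 * f * g) + r * (f * h)) + (q - r * B) * (f * h * g)"
      using id by (simp only: z0 add_0_right)
    hence "(q * g + r * P) * (f * h + 2 * f) = (q * (2 * f * g) + r * (f * h)) + (q - r * B) * (monom 1 \<beta> - 1)"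
      by (simp only: assms(3))
    hence e2: "cyc_red \<beta> (p0 * 0 + (q * g + r * P) * (f * h + 2 * f)) = cyc_red \<beta> (p0 * 0 + q * (2 * f * g) + r * (f * h))"
      by (simp add: cyc_red_cong)
    show "z \<in> gen_code \<alpha> \<beta> [(b, 0), (l, f * h + 2 * f)]"
      unfolding gen2 z
      by (rule CollectI, rule exI[of _ p0], rule exI[of _ "q * g + r * P"])
         (simp only: e1 e2 simp_thms)
  qed
qed

end
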